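(* Let $T$ be a decomposition tree of a distance-hereditary graph $G$, and let $v$ be an internal node of $T$ labeled $\oplus$ with left child $v_l$ and right child $v_r$, such that property (P) holds at $v_l$ and at $v_r$. Assume $\hat\alpha(v_r)>\hat\beta(v_l)$. Then $\hat{min}(v)=\hat{min}(v_l)+\hat{min}(v_r)+\hat\alpha(v_r)-\hat\beta(v_l)$.
   Context: All graphs are finite, simple, undirected. For a graph $H$ and $S\subseteq V(H)$, $N_H[S]$ is $S$ together with all vertices adjacent to a vertex of $S$, and $H[S]$ is the induced subgraph. Graphs carry a "twin set": a single-vertex graph on $x$ has twin set $\{x\}$. For vertex-disjoint graphs $G_l,G_r$ with twin sets $TS(G_l),TS(G_r)$: the true twin operation $G_l\otimes G_r$ has vertex set $V(G_l)\cup V(G_r)$, edge set $E(G_l)\cup E(G_r)\cup\{uw: u\in TS(G_l), w\in TS(G_r)\}$ and twin set $TS(G_l)\cup TS(G_r)$; the false twin operation $G_l\odot G_r$ has vertex set $V(G_l)\cup V(G_r)$, edge set $E(G_l)\cup E(G_r)$, twin set $TS(G_l)\cup TS(G_r)$; the attachment operation $G_l\oplus G_r$ has the same vertex and edge sets as $G_l\otimes G_r$ and twin set $TS(G_l)$. A decomposition tree $T$ of $G$ is a rooted binary tree whose leaves are in bijection with $V(G)$, each internal node having a left and a right child and a label in $\{\otimes,\odot,\oplus\}$; for each node $v$ define $\hat G(v)$ and $\hat{TS}(v)$ recursively: for a leaf $x$, the single-vertex graph on $x$ with twin set $\{x\}$; for an internal node $v$ with label $\circ$ and children $v_l,v_r$,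 $\hat G(v)=\hat G(v_l)\circ\hat G(v_r)$ with the corresponding twin set; one requires $\hat G(\text{root})=G$. Then $\hat G(v)$ is the subgraph of $G$ induced by the set $\hat V(v)$ of leaves below $v$. For a node $u$ and $0\le k\le|\hat{TS}(u)|$, call $S\subseteq\hat V(u)$ $k$-feasible if $\hat V(u)\setminus\hat{TS}(u)\subseteq N_{\hat G(u)}[S]$ and there is $X\subseteq S\cap\hat{TS}(u)$ with $|X|=k$ such that $\hat G(u)[S\setminus X]$ has a perfect matching. $\hat\gamma_k(u)$ is the minimum size of a $k$-feasible set. $\hat{min}(u)=\min\{\hat\gamma_k(u):0\le k\le|\hat{TS}(u)|\}$, and $\hat\alpha(u)$, $\hat\beta(u)$ are the smallest and the largest $k$ with $\hat\gamma_k(u)=\hat{min}(u)$. Property (P) holds at $u$ if for every $0\le k\le|\hat{TS}(u)|$: $\hat\gamma_k(u)=\hat{min}(u)+\hat\alpha(u)-k$ when $k\le\hat\alpha(u)$; $\hat\gamma_k(u)=\hat{min}(u)+k-\hat\beta(u)$ when $k\ge\hat\beta(u)$; $\hat\gamma_k(u)=\hat{min}(u)$ when $\hat\alpha(u)<k<\hat\beta(u)$ and $k-\hat\alpha(u)$ is even; and $\hat\gamma_k(u)=\hat{min}(u)+1$ otherwise. *)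

theory Defs
  imports Main "HOL-Library.Extended_Nat"
begin

text \<open>A finite simple graph is a pair (V, E) with E a set of 2-element subsets of V.\<close>

type_synonym 'a graph = "'a set \<times> 'a set set"

definition adj :: "'a graph \<Rightarrow> 'a \<Rightarrow> 'a \<Rightarrow> bool" where
  "adj G u w \<longleftrightarrow> {u, w} \<in> snd G"

definition closed_nbhd :: "'a graph \<Rightarrow> 'a set \<Rightarrow> 'a set" where
  "closed_nbhd G S = S \<union> {w \<in> fst G. \<exists>u\<in>S. adj G u w}"

definition induced :: "'a graph \<Rightarrow> 'a set \<Rightarrow> 'a graph" where
  "induced G S = (S \<inter> fst G, {e \<in> snd G. e \<subseteq> S})"

definition perfect_matching :: "'a graph \<Rightarrow> 'a set set \<Rightarrow> bool" where
  "perfect_matching G M \<longleftrightarrow> M \<subseteq> snd G \<and>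
     (\<forall>e1\<in>M. \<forall>e2\<in>M. e1 \<noteq> e2 \<longrightarrow> e1 \<inter> e2 = {}) \<and> \<Union>M = fst G"

definition has_perfect_matching :: "'a graph \<Rightarrow> bool" where
  "has_perfect_matching G \<longleftrightarrow> (\<exists>M. perfect_matching G M)"

definition walk_in :: "'a graph \<Rightarrow> 'a set \<Rightarrow> 'a list \<Rightarrow> bool" where
  "walk_in G S p \<longleftrightarrow> p \<noteq> [] \<and> set p \<subseteq> S \<inter> fst G \<and>
     (\<forall>i. Suc i < length p \<longrightarrow> adj G (p ! i) (p ! Suc i))"

definition connected_in :: "'a graph \<Rightarrow> 'a set \<Rightarrow> bool" where
  "connected_in G S \<longleftrightarrow> (\<forall>u\<in>S. \<forall>w\<in>S. \<exists>p. walk_in G S p \<and> hd p = u \<and> last p = w)"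

definition dist_in :: "'a graph \<Rightarrow> 'a set \<Rightarrow> 'a \<Rightarrow> 'a \<Rightarrow> nat" where
  "dist_in G S u w = (LEAST n. \<exists>p. walk_in G S p \<and> hd p = u \<and> last p = w \<and> length p = Suc n)"

definition distance_hereditary :: "'a graph \<Rightarrow> bool" where
  "distance_hereditary G \<longleftrightarrow>
     (\<forall>S \<subseteq> fst G. connected_in G S \<longrightarrow>
        (\<forall>u\<in>S. \<forall>w\<in>S. dist_in G S u w = dist_in G (fst G) u w))"

datatype op = TrueTwin | FalseTwin | Attach

datatype 'a dtree = Leaf 'a | Node op "'a dtree" "'a dtree"

fun tverts :: "'a dtree \<Rightarrow> 'a set" where
  "tverts (Leaf x) = {x}"
| "tverts (Node _ l r) = tverts l \<union> tverts r"

fun tTS :: "'a dtree \<Rightarrow> 'a set" where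
  "tTS (Leaf x) = {x}"
| "tTS (Node TrueTwin l r) = tTS l \<union> tTS r"
| "tTS (Node FalseTwin l r) = tTS l \<union> tTS r"
| "tTS (Node Attach l r) = tTS l"

fun tedges :: "'a dtree \<Rightarrow> 'a set set" where
  "tedges (Leaf x) = {}"
| "tedges (Node TrueTwin l r) = tedges l \<union> tedges r \<union> {{u, w} | u w. u \<in> tTS l \<and> w \<in> tTS r}"
| "tedges (Node FalseTwin l r) = tedges l \<union> tedges r"
| "tedges (Node Attach l r) = tedges l \<union> tedges r \<union> {{u, w} | u w. u \<in> tTS l \<and> w \<in> tTS r}"

definition tgraph :: "'a dtree \<Rightarrow> 'a graph" where
  "tgraph t = (tverts t, tedges t)"

text \<open>Children must be vertex-disjoint (leaves in bijection with vertices).\<close>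
fun wf_dtree :: "'a dtree \<Rightarrow> bool" where
  "wf_dtree (Leaf x) = True"
| "wf_dtree (Node _ l r) \<longleftrightarrow> wf_dtree l \<and> wf_dtree r \<and> tverts l \<inter> tverts r = {}"

definition decomposition_tree :: "'a dtree \<Rightarrow> 'a graph \<Rightarrow> bool" where
  "decomposition_tree T G \<longleftrightarrow> wf_dtree T \<and> tgraph T = G"

text \<open>Nodes of a tree, identified with the subtrees rooted at them.\<close>
fun nodes :: "'a dtree \<Rightarrow> 'a dtree set" where
  "nodes (Leaf x) = {Leaf x}"
| "nodes (Node c l r) = insert (Node c l r) (nodes l \<union> nodes r)"

definition k_feasible :: "'a dtree \<Rightarrow> nat \<Rightarrow> 'a set \<Rightarrow> bool" where
  "k_feasible u k S \<longleftrightarrow> S \<subseteq> tverts u \<and>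
     tverts u - tTS u \<subseteq> closed_nbhd (tgraph u) S \<and>
     (\<exists>X. X \<subseteq> S \<inter> tTS u \<and> card X = k \<and>
          has_perfect_matching (induced (tgraph u) (S - X)))"

text \<open>Minimum size of a k-feasible set (\<open>\<infinity>\<close> if none exists).\<close>
definition gamma_hat :: "'a dtree \<Rightarrow> nat \<Rightarrow> enat" where
  "gamma_hat u k = (INF S \<in> {S. k_feasible u k S}. enat (card S))"

definition min_hat :: "'a dtree \<Rightarrow> enat" where
  "min_hat u = Min (gamma_hat u ` {0..card (tTS u)})"

definition alpha_hat :: "'a dtree \<Rightarrow> nat" where
  "alpha_hat u = Min {k. k \<le> card (tTS u) \<and> gamma_hat u k = min_hat u}"

definition beta_hat :: "'a dtree \<Rightarrow> nat" where
  "beta_hat u = Max {k. k \<le> card (tTS u) \<and> gamma_hat u k = min_hat u}"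

definition property_P :: "'a dtree \<Rightarrow> bool" where
  "property_P u \<longleftrightarrow> (\<forall>k \<le> card (tTS u).
     (k \<le> alpha_hat u \<longrightarrow> gamma_hat u k = min_hat u + enat (alpha_hat u - k)) \<and>
     (beta_hat u \<le> k \<longrightarrow> gamma_hat u k = min_hat u + enat (k - beta_hat u)) \<and>
     (alpha_hat u < k \<and> k < beta_hat u \<and> even (k - alpha_hat u) \<longrightarrow> gamma_hat u k = min_hat u) \<and>
     (alpha_hat u < k \<and> k < beta_hat u \<and> odd (k - alpha_hat u) \<longrightarrow> gamma_hat u k = min_hat u + 1))"

end

theory Submission
  imports Defs
begin
lemma tTS_sub: "tTS t \<subseteq> tverts t"
  by (induction t rule: tTS.induct) auto
lemma fin_tverts: "finite (tverts t)"
  by (induction t) auto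
lemma fin_tTS: "finite (tTS t)"
  by (rule finite_subset[OF tTS_sub fin_tverts])
lemma tTS_ne: "tTS t \<noteq> {}"
  by (induction t rule: tTS.induct) auto
lemma nodes_wf: "s \<in> nodes T \<Longrightarrow> wf_dtree T \<Longrightarrow> wf_dtree s"
  by (induction T) auto
lemma adj_tgraph: "adj (tgraph t) u w \<longleftrightarrow> {u,w} \<in> tedges t"
  by (simp add: adj_def tgraph_def)
lemma tedges_sub: "e \<in> tedges t \<Longrightarrow> e \<subseteq> tverts t \<and> e \<noteq> {}"
proof (induction t arbitrary: e rule: tedges.induct)
  case (2 l r)
  then show ?case using tTS_sub[of l] tTS_sub[of r] by auto
next
  case (4 l r)
  then show ?case using tTS_sub[of l] tTS_sub[of r] by auto
qed auto

lemma kfeas_le: "k_feasible u k S \<Longrightarrow> k \<le> card (tTS u)"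
proof -
  assume "k_feasible u k S"
  then obtain X where "X \<subseteq> tTS u" "card X = k" unfolding k_feasible_def by auto
  then show ?thesis using card_mono[OF fin_tTS] by metis
qed

lemma kfeas_gamma: "k_feasible u k S \<Longrightarrow> gamma_hat u k \<le> enat (card S)"
  unfolding gamma_hat_def by (rule INF_lower) simp

lemma kfeas_fin: "k_feasible u k S \<Longrightarrow> finite S"
  unfolding k_feasible_def by (metis fin_tverts finite_subset)


lemma decomp:
  assumes disj: "tverts l \<inter> tverts r = {}"
    and kf: "k_feasible (Node Attach l r) k S"
  shows "\<exists>m. k_feasible l (k+m) (S \<inter> tverts l) \<and> k_feasible r m (S \<inter> tverts r)"
proof -
  let ?u = "Node Attach l r"
  let ?Vl = "tverts l" and ?Vr = "tverts r"
  have TSl: "tTS l \<subseteq> ?Vl" and TSr: "tTS r \<subseteq> ?Vr" by (rule tTS_sub)+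
  have finS: "finite S" using kf by (rule kfeas_fin)
  from kf have Ssub: "S \<subseteq> ?Vl \<union> ?Vr"
    and dom: "?Vl \<union> ?Vr - tTS l \<subseteq> closed_nbhd (tgraph ?u) S"
    unfolding k_feasible_def by auto
  from kf obtain X M where X: "X \<subseteq> S \<inter> tTS l" "card X = k"
    and pm: "perfect_matching (induced (tgraph ?u) (S - X)) M"
    unfolding k_feasible_def has_perfect_matching_def by auto
  have Msub: "\<And>e. e \<in> M \<Longrightarrow> e \<in> tedges ?u \<and> e \<subseteq> S - X"
    using pm unfolding perfect_matching_def induced_def tgraph_def by auto
  have MsubS: "\<And>e. e \<in> M \<Longrightarrow> e \<subseteq> S - X" using Msub by blast
  have Mdisj: "\<And>e1 e2. e1 \<in> M \<Longrightarrow> e2 \<in> M \<Longrightarrow> e1 \<noteq> e2 \<Longrightarrow> e1 \<inter> e2 = {}"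
    using pm unfolding perfect_matching_def by auto
  have UM: "\<Union>M = S - X"
    using pm Ssub unfolding perfect_matching_def induced_def tgraph_def by auto
  have finM: "finite M"
  proof -
    have "M \<subseteq> Pow S" using Msub by auto
    thus ?thesis using finS by (metis finite_Pow_iff finite_subset)
  qed
  define Ml where "Ml = {e\<in>M. e \<subseteq> ?Vl}"
  define Mr where "Mr = {e\<in>M. e \<subseteq> ?Vr}"
  define Mc where "Mc = M - Ml - Mr"
  have cross: "\<exists>a b. e = {a,b} \<and> a \<in> tTS l \<and> b \<in> tTS r" if "e \<in> Mc" for e
  proof -
    have "e \<in> tedges ?u" "\<not> e \<subseteq> ?Vl" "\<not> e \<subseteq> ?Vr"
      using that Msub unfolding Mc_def Ml_def Mr_def by auto
    then show ?thesis using tedges_sub[of e l] tedges_sub[of e r] by auto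
  qed
  have crossl: "e \<inter> ?Vl = {a} \<and> e \<inter> ?Vr = {b}" if "e = {a,b}" "a \<in> tTS l" "b \<in> tTS r" for e a b
    using that TSl TSr disj by auto
  have finMc: "finite Mc" using finM unfolding Mc_def by auto
  have cardY: "card (\<Union>Mc \<inter> V) = card Mc" if "V = ?Vl \<or> V = ?Vr" for V
  proof -
    have c1: "card (e \<inter> V) = 1" if "e \<in> Mc" for e
      using cross[OF that] crossl \<open>V = ?Vl \<or> V = ?Vr\<close> by fastforce
    have "\<Union>Mc \<inter> V = (\<Union>e\<in>Mc. e \<inter> V)" by auto
    also have "card \<dots> = (\<Sum>e\<in>Mc. card (e \<inter> V))"
    proof (rule card_UN_disjoint[OF finMc])
      show "\<forall>e\<in>Mc. finite (e \<inter> V)" using c1 by (metis card.infinite zero_neq_one)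
      show "\<forall>i\<in>Mc. \<forall>j\<in>Mc. i \<noteq> j \<longrightarrow> i \<inter> V \<inter> (j \<inter> V) = {}"
        using Mdisj unfolding Mc_def by blast
    qed
    also have "\<dots> = card Mc" using c1 by simp
    finally show ?thesis .
  qed
  define Yl where "Yl = \<Union>Mc \<inter> ?Vl"
  define Yr where "Yr = \<Union>Mc \<inter> ?Vr"
  define m where "m = card Mc"
  have cYl: "card Yl = m" unfolding Yl_def m_def by (rule cardY) simp
  have cYr: "card Yr = m" unfolding Yr_def m_def by (rule cardY) simp
  have McM: "Mc \<subseteq> M" unfolding Mc_def by auto
  have YlS: "Yl \<subseteq> S - X" using UM McM unfolding Yl_def by auto
  have YrS: "Yr \<subseteq> S - X" using UM McM unfolding Yr_def by auto
  have YlT: "Yl \<subseteq> tTS l"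
  proof
    fix v assume "v \<in> Yl"
    then obtain e where e: "e \<in> Mc" "v \<in> e \<inter> ?Vl" unfolding Yl_def by auto
    from cross[OF e(1)] obtain a b where ab: "e = {a,b}" "a \<in> tTS l" "b \<in> tTS r" by auto
    from crossl[OF ab] e(2) ab show "v \<in> tTS l" by auto
  qed
  have YrT: "Yr \<subseteq> tTS r"
  proof
    fix v assume "v \<in> Yr"
    then obtain e where e: "e \<in> Mc" "v \<in> e \<inter> ?Vr" unfolding Yr_def by auto
    from cross[OF e(1)] obtain a b where ab: "e = {a,b}" "a \<in> tTS l" "b \<in> tTS r" by auto
    from crossl[OF ab] e(2) ab show "v \<in> tTS r" by auto
  qed
  have eu: "e \<in> tedges l \<or> e \<in> tedges r \<or> (\<exists>a b. e = {a,b} \<and> a \<in> tTS l \<and> b \<in> tTS r)"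
    if "e \<in> M" for e
    using Msub[OF that] by auto
  have Ml_e: "e \<in> tedges l" if "e \<in> Ml" for e
  proof -
    have "e \<in> M" "e \<subseteq> ?Vl" using that unfolding Ml_def by auto
    show ?thesis
      using eu[OF \<open>e \<in> M\<close>] tedges_sub[of e r] \<open>e \<subseteq> ?Vl\<close> disj TSr by blast
  qed
  have Mr_e: "e \<in> tedges r" if "e \<in> Mr" for e
  proof -
    have "e \<in> M" "e \<subseteq> ?Vr" using that unfolding Mr_def by auto
    show ?thesis
      using eu[OF \<open>e \<in> M\<close>] tedges_sub[of e l] \<open>e \<subseteq> ?Vr\<close> disj TSl by blast
  qed
  have Ml_Y: "e \<inter> \<Union>Mc = {}" if "e \<in> Ml \<or> e \<in> Mr" for e
  proof -
    have "e \<in> M" "e \<notin> Mc" using that unfolding Mc_def Ml_def Mr_def by auto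
    then show ?thesis using Mdisj McM by blast
  qed
  have Ml_sub: "e \<in> tedges l \<and> e \<subseteq> S \<inter> ?Vl - (X \<union> Yl)" if "e \<in> Ml" for e
  proof -
    have "e \<in> M" "e \<subseteq> ?Vl" using that unfolding Ml_def by auto
    then show ?thesis using Ml_e[OF that] Ml_Y[of e] MsubS[of e] that unfolding Yl_def by auto
  qed
  have Mr_sub: "e \<in> tedges r \<and> e \<subseteq> S \<inter> ?Vr - Yr" if "e \<in> Mr" for e
  proof -
    have "e \<in> M" "e \<subseteq> ?Vr" using that unfolding Mr_def by auto
    then show ?thesis using Mr_e[OF that] Ml_Y[of e] MsubS[of e] that unfolding Yr_def by auto
  qed
  have XVl: "X \<subseteq> ?Vl" using X(1) TSl by auto
  have finX: "finite X" using X(1) fin_tTS finite_subset by (metis le_infE)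
  have finYl: "finite Yl" unfolding Yl_def using fin_tverts[of l] by (rule finite_Int[OF disjI2])
  have kl: "k_feasible l (k+m) (S \<inter> ?Vl)"
    unfolding k_feasible_def
  proof (intro conjI)
    show "S \<inter> ?Vl \<subseteq> ?Vl" by simp
    show "?Vl - tTS l \<subseteq> closed_nbhd (tgraph l) (S \<inter> ?Vl)"
    proof
      fix x assume x: "x \<in> ?Vl - tTS l"
      then have "x \<in> closed_nbhd (tgraph ?u) S" using dom by auto
      then consider "x \<in> S" | s where "s \<in> S" "{s,x} \<in> tedges ?u"
        unfolding closed_nbhd_def adj_tgraph by auto
      then show "x \<in> closed_nbhd (tgraph l) (S \<inter> ?Vl)"
      proof cases
        case 1 then show ?thesis using x unfolding closed_nbhd_def by auto
      next
        case 2
        have "{s,x} \<in> tedges l"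
        proof -
          have "{s,x} \<notin> tedges r" using tedges_sub[of "{s,x}" r] x disj by auto
          moreover have "\<not> (\<exists>a b. {s,x} = {a,b} \<and> a \<in> tTS l \<and> b \<in> tTS r)"
            using x disj TSr by (auto simp: doubleton_eq_iff)
          ultimately show ?thesis using 2(2) by auto
        qed
        then have "s \<in> ?Vl" using tedges_sub[of "{s,x}" l] by auto
        then show ?thesis using 2(1) x \<open>{s,x} \<in> tedges l\<close>
          unfolding closed_nbhd_def adj_def tgraph_def by auto
      qed
    qed
    show "\<exists>Z. Z \<subseteq> S \<inter> ?Vl \<inter> tTS l \<and> card Z = k + m \<and>
        has_perfect_matching (induced (tgraph l) (S \<inter> ?Vl - Z))"
    proof (intro exI conjI)
      show "X \<union> Yl \<subseteq> S \<inter> ?Vl \<inter> tTS l" using X(1) YlS YlT TSl by auto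
      show "card (X \<union> Yl) = k + m"
        using card_Un_disjoint[OF finX finYl] YlS X(2) cYl by auto
      show "has_perfect_matching (induced (tgraph l) (S \<inter> ?Vl - (X \<union> Yl)))"
        unfolding has_perfect_matching_def perfect_matching_def
      proof (intro exI conjI)
        show "Ml \<subseteq> snd (induced (tgraph l) (S \<inter> ?Vl - (X \<union> Yl)))"
          using Ml_sub unfolding induced_def tgraph_def by auto
        show "\<forall>e1\<in>Ml. \<forall>e2\<in>Ml. e1 \<noteq> e2 \<longrightarrow> e1 \<inter> e2 = {}"
          using Mdisj unfolding Ml_def by auto
        show "\<Union>Ml = fst (induced (tgraph l) (S \<inter> ?Vl - (X \<union> Yl)))"
        proof
          show "\<Union>Ml \<subseteq> fst (induced (tgraph l) (S \<inter> ?Vl - (X \<union> Yl)))"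
            using Ml_sub unfolding induced_def tgraph_def by auto
          show "fst (induced (tgraph l) (S \<inter> ?Vl - (X \<union> Yl))) \<subseteq> \<Union>Ml"
          proof
            fix v assume "v \<in> fst (induced (tgraph l) (S \<inter> ?Vl - (X \<union> Yl)))"
            then have v: "v \<in> S" "v \<in> ?Vl" "v \<notin> X" "v \<notin> Yl"
              unfolding induced_def tgraph_def by auto
            then obtain e where e: "e \<in> M" "v \<in> e" using UM by auto
            have "e \<notin> Mc" using e v unfolding Yl_def by auto
            moreover have "e \<notin> Mr" using e v disj unfolding Mr_def by auto
            ultimately have "e \<in> Ml" using e unfolding Mc_def by auto
            then show "v \<in> \<Union>Ml" using e by auto
          qed
        qed
      qed
    qed
  qed
  have kr: "k_feasible r m (S \<inter> ?Vr)"
    unfolding k_feasible_def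
  proof (intro conjI)
    show "S \<inter> ?Vr \<subseteq> ?Vr" by simp
    show "?Vr - tTS r \<subseteq> closed_nbhd (tgraph r) (S \<inter> ?Vr)"
    proof
      fix x assume x: "x \<in> ?Vr - tTS r"
      then have "x \<in> closed_nbhd (tgraph ?u) S" using dom disj TSl by auto
      then consider "x \<in> S" | s where "s \<in> S" "{s,x} \<in> tedges ?u"
        unfolding closed_nbhd_def adj_tgraph by auto
      then show "x \<in> closed_nbhd (tgraph r) (S \<inter> ?Vr)"
      proof cases
        case 1 then show ?thesis using x unfolding closed_nbhd_def by auto
      next
        case 2
        have "{s,x} \<in> tedges r"
        proof -
          have "{s,x} \<notin> tedges l" using tedges_sub[of "{s,x}" l] x disj by auto
          moreover have "\<not> (\<exists>a b. {s,x} = {a,b} \<and> a \<in> tTS l \<and> b \<in> tTS r)"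
            using x disj TSl by (auto simp: doubleton_eq_iff)
          ultimately show ?thesis using 2(2) by auto
        qed
        then have "s \<in> ?Vr" using tedges_sub[of "{s,x}" r] by auto
        then show ?thesis using 2(1) x \<open>{s,x} \<in> tedges r\<close>
          unfolding closed_nbhd_def adj_def tgraph_def by auto
      qed
    qed
    show "\<exists>Z. Z \<subseteq> S \<inter> ?Vr \<inter> tTS r \<and> card Z = m \<and>
        has_perfect_matching (induced (tgraph r) (S \<inter> ?Vr - Z))"
    proof (intro exI conjI)
      show "Yr \<subseteq> S \<inter> ?Vr \<inter> tTS r" using YrS YrT TSr by auto
      show "card Yr = m" by (rule cYr)
      show "has_perfect_matching (induced (tgraph r) (S \<inter> ?Vr - Yr))"
        unfolding has_perfect_matching_def perfect_matching_def
      proof (intro exI conjI)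
        show "Mr \<subseteq> snd (induced (tgraph r) (S \<inter> ?Vr - Yr))"
          using Mr_sub unfolding induced_def tgraph_def by auto
        show "\<forall>e1\<in>Mr. \<forall>e2\<in>Mr. e1 \<noteq> e2 \<longrightarrow> e1 \<inter> e2 = {}"
          using Mdisj unfolding Mr_def by auto
        show "\<Union>Mr = fst (induced (tgraph r) (S \<inter> ?Vr - Yr))"
        proof
          show "\<Union>Mr \<subseteq> fst (induced (tgraph r) (S \<inter> ?Vr - Yr))"
            using Mr_sub unfolding induced_def tgraph_def by auto
          show "fst (induced (tgraph r) (S \<inter> ?Vr - Yr)) \<subseteq> \<Union>Mr"
          proof
            fix v assume "v \<in> fst (induced (tgraph r) (S \<inter> ?Vr - Yr))"
            then have v: "v \<in> S" "v \<in> ?Vr" "v \<notin> Yr"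
              unfolding induced_def tgraph_def by auto
            have "v \<notin> X" using v XVl disj by auto
            then obtain e where e: "e \<in> M" "v \<in> e" using UM v by auto
            have "e \<notin> Mc" using e v unfolding Yr_def by auto
            moreover have "e \<notin> Ml" using e v disj unfolding Ml_def by auto
            ultimately have "e \<in> Mr" using e unfolding Mc_def by auto
            then show "v \<in> \<Union>Mr" using e by auto
          qed
        qed
      qed
    qed
  qed
  show ?thesis using kl kr by blast
qed


lemma comp:
  assumes disj: "tverts l \<inter> tverts r = {}"
    and kl: "k_feasible l m A" and kr: "k_feasible r m B" and m1: "m \<ge> 1"
  shows "k_feasible (Node Attach l r) 0 (A \<union> B)"
proof -
  let ?u = "Node Attach l r"
  let ?Vl = "tverts l" and ?Vr = "tverts r"
  have TSl: "tTS l \<subseteq> ?Vl" and TSr: "tTS r \<subseteq> ?Vr" by (rule tTS_sub)+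
  from kl have AV: "A \<subseteq> ?Vl" and domA: "?Vl - tTS l \<subseteq> closed_nbhd (tgraph l) A"
    unfolding k_feasible_def by auto
  from kr have BV: "B \<subseteq> ?Vr" and domB: "?Vr - tTS r \<subseteq> closed_nbhd (tgraph r) B"
    unfolding k_feasible_def by auto
  from kl obtain XA MA where XA: "XA \<subseteq> A \<inter> tTS l" "card XA = m"
    and pmA: "perfect_matching (induced (tgraph l) (A - XA)) MA"
    unfolding k_feasible_def has_perfect_matching_def by auto
  from kr obtain XB MB where XB: "XB \<subseteq> B \<inter> tTS r" "card XB = m"
    and pmB: "perfect_matching (induced (tgraph r) (B - XB)) MB"
    unfolding k_feasible_def has_perfect_matching_def by auto
  have MAs: "\<And>e. e \<in> MA \<Longrightarrow> e \<in> tedges l \<and> e \<subseteq> A - XA"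
    using pmA unfolding perfect_matching_def induced_def tgraph_def by auto
  have MBs: "\<And>e. e \<in> MB \<Longrightarrow> e \<in> tedges r \<and> e \<subseteq> B - XB"
    using pmB unfolding perfect_matching_def induced_def tgraph_def by auto
  have MAd: "\<And>e1 e2. e1 \<in> MA \<Longrightarrow> e2 \<in> MA \<Longrightarrow> e1 \<noteq> e2 \<Longrightarrow> e1 \<inter> e2 = {}"
    using pmA unfolding perfect_matching_def by auto
  have MBd: "\<And>e1 e2. e1 \<in> MB \<Longrightarrow> e2 \<in> MB \<Longrightarrow> e1 \<noteq> e2 \<Longrightarrow> e1 \<inter> e2 = {}"
    using pmB unfolding perfect_matching_def by auto
  have UA: "\<Union>MA = A - XA"
    using pmA AV unfolding perfect_matching_def induced_def tgraph_def by auto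
  have UB: "\<Union>MB = B - XB"
    using pmB BV unfolding perfect_matching_def induced_def tgraph_def by auto
  have finXA: "finite XA" using XA(1) fin_tTS[of l] by (meson finite_subset le_infE)
  have finXB: "finite XB" using XB(1) fin_tTS[of r] by (meson finite_subset le_infE)
  obtain f where f: "bij_betw f XA XB"
    using finite_same_card_bij[OF finXA finXB] XA(2) XB(2) by auto
  have fin: "\<And>a. a \<in> XA \<Longrightarrow> f a \<in> XB" using f by (simp add: bij_betw_apply)
  have finj: "\<And>a b. a \<in> XA \<Longrightarrow> b \<in> XA \<Longrightarrow> f a = f b \<Longrightarrow> a = b"
    using f unfolding bij_betw_def inj_on_def by auto
  have fim: "f ` XA = XB" using f unfolding bij_betw_def by auto
  define Mc where "Mc = (\<lambda>a. {a, f a}) ` XA"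
  define M where "M = MA \<union> MB \<union> Mc"
  have XAV: "XA \<subseteq> ?Vl" using XA(1) TSl by auto
  have XBV: "XB \<subseteq> ?Vr" using XB(1) TSr by auto
  have pm: "perfect_matching (induced (tgraph ?u) (A \<union> B - {})) M"
    unfolding perfect_matching_def
  proof (intro conjI)
    show "M \<subseteq> snd (induced (tgraph ?u) (A \<union> B - {}))"
    proof
      fix e assume "e \<in> M"
      then consider "e \<in> MA" | "e \<in> MB" | a where "a \<in> XA" "e = {a, f a}"
        unfolding M_def Mc_def by auto
      then show "e \<in> snd (induced (tgraph ?u) (A \<union> B - {}))"
      proof cases
        case 1 then show ?thesis using MAs[OF 1] unfolding induced_def tgraph_def by auto
      next
        case 2 then show ?thesis using MBs[OF 2] unfolding induced_def tgraph_def by auto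
      next
        case 3
        have "f a \<in> XB" using fin[OF 3(1)] .
        then have "a \<in> tTS l" "f a \<in> tTS r" "a \<in> A" "f a \<in> B" using 3 XA(1) XB(1) by auto
        then have "{a, f a} \<in> tedges ?u" by auto
        then show ?thesis using 3 \<open>a \<in> A\<close> \<open>f a \<in> B\<close> unfolding induced_def tgraph_def by auto
      qed
    qed
    show "\<forall>e1\<in>M. \<forall>e2\<in>M. e1 \<noteq> e2 \<longrightarrow> e1 \<inter> e2 = {}"
    proof (intro ballI impI)
      fix e1 e2 assume e1: "e1 \<in> M" and e2: "e2 \<in> M" and ne: "e1 \<noteq> e2"
      have cA: "e \<inter> c = {}" if h: "e \<in> MA" "c \<in> Mc" for e c
      proof -
        obtain a where a: "a \<in> XA" "c = {a, f a}" using h(2) unfolding Mc_def by auto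
        show ?thesis using MAs[OF h(1)] fin[OF a(1)] a XBV AV disj by auto
      qed
      have cB: "e \<inter> c = {}" if h: "e \<in> MB" "c \<in> Mc" for e c
      proof -
        obtain a where a: "a \<in> XA" "c = {a, f a}" using h(2) unfolding Mc_def by auto
        show ?thesis using MBs[OF h(1)] fin[OF a(1)] a XAV BV XBV disj by fastforce
      qed
      have AB: "e \<inter> c = {}" if "e \<in> MA" "c \<in> MB" for e c
        using MAs[OF that(1)] MBs[OF that(2)] AV BV disj by fastforce
      have cc: "e \<inter> c = {}" if h: "e \<in> Mc" "c \<in> Mc" "e \<noteq> c" for e c
      proof -
        obtain a where a: "a \<in> XA" "e = {a, f a}" using h(1) unfolding Mc_def by auto
        obtain b where b: "b \<in> XA" "c = {b, f b}" using h(2) unfolding Mc_def by auto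
        have "a \<noteq> b" using a b h(3) by auto
        then have "f a \<noteq> f b" using finj a b by auto
        moreover have "a \<noteq> f b" "b \<noteq> f a" using fin a b XAV XBV disj by auto
        ultimately show ?thesis using a b \<open>a \<noteq> b\<close> by auto
      qed
      show "e1 \<inter> e2 = {}"
        using e1 e2 ne MAd MBd cA cB AB cc unfolding M_def by (metis Int_commute UnE)
    qed
    show "\<Union>M = fst (induced (tgraph ?u) (A \<union> B - {}))"
    proof -
      have "\<Union>Mc = XA \<union> XB" using fim unfolding Mc_def by auto
      then have "\<Union>M = A \<union> B" using UA UB XA(1) XB(1) unfolding M_def by auto
      then show ?thesis using AV BV unfolding induced_def tgraph_def by auto
    qed
  qed
  show ?thesis
    unfolding k_feasible_def
  proof (intro conjI)
    show "A \<union> B \<subseteq> tverts ?u" using AV BV by auto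
    show "tverts ?u - tTS ?u \<subseteq> closed_nbhd (tgraph ?u) (A \<union> B)"
    proof
      fix x assume x: "x \<in> tverts ?u - tTS ?u"
      then consider "x \<in> ?Vl - tTS l" | "x \<in> ?Vr - tTS r" | "x \<in> tTS r" by auto
      then show "x \<in> closed_nbhd (tgraph ?u) (A \<union> B)"
      proof cases
        case 1
        then have "x \<in> closed_nbhd (tgraph l) A" using domA by auto
        then show ?thesis unfolding closed_nbhd_def adj_def tgraph_def by auto
      next
        case 2
        then have "x \<in> closed_nbhd (tgraph r) B" using domB by auto
        then show ?thesis unfolding closed_nbhd_def adj_def tgraph_def by auto
      next
        case 3
        have "XA \<noteq> {}" using XA(2) m1 by auto
        then obtain a where a: "a \<in> XA" by auto
        then have "a \<in> A" "a \<in> tTS l" using XA(1) by auto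
        moreover have "{a, x} \<in> tedges ?u" using \<open>a \<in> tTS l\<close> 3 by auto
        ultimately show ?thesis using 3 TSr unfolding closed_nbhd_def adj_def tgraph_def by auto
      qed
    qed
    show "\<exists>X. X \<subseteq> (A \<union> B) \<inter> tTS ?u \<and> card X = 0 \<and>
        has_perfect_matching (induced (tgraph ?u) (A \<union> B - X))"
      using pm unfolding has_perfect_matching_def by (intro exI[of _ "{}"]) auto
  qed
qed


lemma gamma_attained:
  assumes "gamma_hat u k = enat n"
  shows "\<exists>S. k_feasible u k S \<and> card S = n"
proof -
  let ?I = "(\<lambda>S. enat (card S)) ` {S. k_feasible u k S}"
  have ne: "?I \<noteq> {}"
  proof
    assume "?I = {}"
    then have "gamma_hat u k = \<infinity>" unfolding gamma_hat_def Inf_enat_def by simp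
    then show False using assms by simp
  qed
  have "gamma_hat u k = (LEAST x. x \<in> ?I)" unfolding gamma_hat_def Inf_enat_def by (rule if_not_P[OF ne])
  moreover have "(LEAST x. x \<in> ?I) \<in> ?I" using ne by (metis LeastI ex_in_conv)
  ultimately have "enat n \<in> ?I" using assms by simp
  then show ?thesis by auto
qed

lemma min_le_gamma: "k \<le> card (tTS u) \<Longrightarrow> min_hat u \<le> gamma_hat u k"
  unfolding min_hat_def by (rule Min_le) auto

lemma ab_le:
  "alpha_hat u \<le> card (tTS u) \<and> beta_hat u \<le> card (tTS u)"
proof -
  define K where "K = {k. k \<le> card (tTS u) \<and> gamma_hat u k = min_hat u}"
  have "min_hat u \<in> gamma_hat u ` {0..card (tTS u)}"
    unfolding min_hat_def by (rule Min_in) auto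
  then have ne: "K \<noteq> {}" unfolding K_def by auto
  have fin: "finite K" unfolding K_def by auto
  have "Min K \<in> K" "Max K \<in> K" using Min_in[OF fin ne] Max_in[OF fin ne] by auto
  then show ?thesis unfolding K_def alpha_hat_def beta_hat_def by auto
qed

theorem lemma44:
  fixes T :: "'a dtree" and G :: "'a graph" and vl vr :: "'a dtree"
  assumes "distance_hereditary G"
    and "decomposition_tree T G"
    and "Node Attach vl vr \<in> nodes T"
    and "property_P vl" and "property_P vr"
    and "alpha_hat vr > beta_hat vl"
  shows "min_hat (Node Attach vl vr) = min_hat vl + min_hat vr + enat (alpha_hat vr - beta_hat vl)"
proof -
  let ?u = "Node Attach vl vr"
  let ?B = "beta_hat vl" and ?A = "alpha_hat vr"
  let ?RHS = "min_hat vl + min_hat vr + enat (?A - ?B)"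
  have "wf_dtree ?u" using nodes_wf assms(2,3) unfolding decomposition_tree_def by blast
  then have disj: "tverts vl \<inter> tverts vr = {}" by simp
  define t where "t = card (tTS vl)"
  have tu: "card (tTS ?u) = t" unfolding t_def by simp
  have t1: "t \<ge> 1" unfolding t_def using tTS_ne[of vl] fin_tTS[of vl]
    by (simp add: Suc_leI card_gt_0_iff)
  have Bt: "?B \<le> t" using ab_le[of vl] unfolding t_def by simp
  have Ar: "?A \<le> card (tTS vr)" using ab_le[of vr] by simp
  have PL: "\<And>j. j \<le> t \<Longrightarrow> ?B \<le> j \<Longrightarrow> gamma_hat vl j = min_hat vl + enat (j - ?B)"
    using assms(4) unfolding property_P_def t_def by blast
  have PR: "\<And>j. j \<le> card (tTS vr) \<Longrightarrow> j \<le> ?A \<Longrightarrow> gamma_hat vr j = min_hat vr + enat (?A - j)"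
    using assms(5) unfolding property_P_def by blast
  have lowL: "min_hat vl + enat (j - ?B) \<le> gamma_hat vl j" if "j \<le> t" for j
  proof (cases "?B \<le> j")
    case True then show ?thesis using PL[OF that] by simp
  next
    case False then show ?thesis using min_le_gamma[of j vl] that unfolding t_def by (simp add: zero_enat_def[symmetric])
  qed
  have lowR: "min_hat vr + enat (?A - j) \<le> gamma_hat vr j" if "j \<le> card (tTS vr)" for j
  proof (cases "j \<le> ?A")
    case True then show ?thesis using PR[OF that] by simp
  next
    case False then show ?thesis using min_le_gamma[of j vr] that by (simp add: zero_enat_def[symmetric])
  qed
  have lower: "?RHS \<le> gamma_hat ?u k" for k
    unfolding gamma_hat_def
  proof (rule INF_greatest)
    fix S assume "S \<in> {S. k_feasible ?u k S}"
    then have kf: "k_feasible ?u k S" by simp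
    obtain m where kl: "k_feasible vl (k+m) (S \<inter> tverts vl)"
      and kr: "k_feasible vr m (S \<inter> tverts vr)" using decomp[OF disj kf] by blast
    have "S \<subseteq> tverts vl \<union> tverts vr" using kf unfolding k_feasible_def by simp
    then have "S = (S \<inter> tverts vl) \<union> (S \<inter> tverts vr)" by blast
    moreover have "finite S" using kfeas_fin[OF kf] .
    ultimately have cS: "card S = card (S \<inter> tverts vl) + card (S \<inter> tverts vr)"
      using disj by (metis card_Un_disjoint finite_Int inf_assoc inf_bot_right inf_left_commute)
    have j1: "k + m \<le> t" using kfeas_le[OF kl] unfolding t_def .
    have j2: "m \<le> card (tTS vr)" using kfeas_le[OF kr] .
    have g1: "min_hat vl + enat (k + m - ?B) \<le> enat (card (S \<inter> tverts vl))"
      using lowL[OF j1] kfeas_gamma[OF kl] by (rule order_trans)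
    have g2: "min_hat vr + enat (?A - m) \<le> enat (card (S \<inter> tverts vr))"
      using lowR[OF j2] kfeas_gamma[OF kr] by (rule order_trans)
    obtain a where a: "min_hat vl = enat a" using g1 by (cases "min_hat vl") auto
    obtain b where b: "min_hat vr = enat b" using g2 by (cases "min_hat vr") auto
    have "a + (k + m - ?B) \<le> card (S \<inter> tverts vl)" using g1 a by simp
    moreover have "b + (?A - m) \<le> card (S \<inter> tverts vr)" using g2 b by simp
    ultimately have "a + b + (?A - ?B) \<le> card S" using cS assms(6) by arith
    then show "?RHS \<le> enat (card S)" using a b by simp
  qed
  have "?RHS \<le> min_hat ?u"
    unfolding min_hat_def[of ?u] using lower by (subst Min_ge_iff) auto
  moreover have "min_hat ?u \<le> ?RHS"
  proof (cases "min_hat vl = \<infinity> \<or> min_hat vr = \<infinity>")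
    case True then show ?thesis by auto
  next
    case False
    then obtain a b where a: "min_hat vl = enat a" and b: "min_hat vr = enat b" by auto
    define m where "m = min ?A t"
    have m1: "m \<ge> 1" using t1 assms(6) unfolding m_def by simp
    have gl: "gamma_hat vl m = enat (a + (m - ?B))"
      using PL[of m] Bt assms(6) a unfolding m_def by simp
    have gr: "gamma_hat vr m = enat (b + (?A - m))"
      using PR[of m] Ar b unfolding m_def by simp
    obtain SA where SA: "k_feasible vl m SA" "card SA = a + (m - ?B)"
      using gamma_attained[OF gl] by blast
    obtain SB where SB: "k_feasible vr m SB" "card SB = b + (?A - m)"
      using gamma_attained[OF gr] by blast
    have kf: "k_feasible ?u 0 (SA \<union> SB)" using comp[OF disj SA(1) SB(1) m1] .
    have "min_hat ?u \<le> gamma_hat ?u 0" by (rule min_le_gamma) simp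
    also have "\<dots> \<le> enat (card (SA \<union> SB))" by (rule kfeas_gamma[OF kf])
    also have "\<dots> \<le> enat (card SA + card SB)" by (simp add: card_Un_le)
    also have "card SA + card SB = a + b + (?A - ?B)"
      using SA(2) SB(2) assms(6) Bt unfolding m_def by arith
    finally show ?thesis using a b by simp
  qed
  ultimately show ?thesis by (simp only: order_antisym_conv)
qed

end
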